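(* Let $X$ be a real random variable with $\mathbb{E}X^2<\infty$, $\mu=\mathbb{E}X$, and $\sigma^2=\operatorname{Var}(X)>0$. Let $(X_{k,n})_{1\le k\le n}$ be a triangular array of i.i.d. random variables distributed as $X$, and $S_{k,k}=\sum_{i=1}^kX_{i,k}$. Then, as $n\to\infty$, \[ \frac{1}{\sigma\sqrt{\log n}}\sum_{k=1}^n\left(\frac{S_{k,k}}{k}-\mu\right)\xrightarrow{d}\mathcal{N}, \] where $\mathcal{N}$ is a standard normal random variable.
   Context: $\xrightarrow{d}$ denotes convergence in distribution. *)

theory Defs
  imports "HOL-Probability.Probability"
begin

end

theory Submission
  imports Defs
begin


lemma tri_sum:
  fixes f :: "nat \<Rightarrow> nat \<Rightarrow> 'b::comm_monoid_add"
  shows "(\<Sum>p\<in>{(i,k). 1\<le>i \<and> i\<le>k \<and> k\<le>n}. f (fst p) (snd p)) = (\<Sum>k=1..n. \<Sum>i=1..k. f i k)"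
proof -
  have "(\<Sum>k=1..n. \<Sum>i=1..k. f i k) = (\<Sum>(k,i)\<in>Sigma {1..n} (\<lambda>k. {1..k}). f i k)"
    by (rule sum.Sigma) auto
  also have "\<dots> = (\<Sum>p\<in>prod.swap ` Sigma {1..n} (\<lambda>k. {1..k}). f (fst p) (snd p))"
    by (subst sum.reindex) (auto simp: case_prod_beta)
  also have "prod.swap ` Sigma {1..n} (\<lambda>k. {1..k}) = {(i,k). 1\<le>i \<and> i\<le>k \<and> k\<le>n}"
    by (auto simp: image_iff)
  finally show ?thesis by simp
qed

lemma finite_tri: "finite {(i,k). 1\<le>i \<and> i\<le>k \<and> k\<le>(n::nat)}"
  by (rule finite_subset[of _ "{1..n}\<times>{1..n}"]) auto

lemma exp_minus_approx:
  fixes x :: real assumes "x \<ge> 0"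
  shows "\<bar>(1 - x) - exp (- x)\<bar> \<le> x\<^sup>2"
proof -
  have "1 + x \<le> exp x" by (rule exp_ge_add_one_self)
  hence a: "exp (-x) \<le> 1 / (1 + x)" using assms by (simp add: exp_minus field_simps)
  have "1 / (1 + x) \<le> 1 - x + x^2"
    using assms by (simp add: field_simps power2_eq_square)
  moreover have "1 - x \<le> exp (-x)" using exp_ge_add_one_self[of "-x"] by simp
  ultimately show ?thesis using a by (simp add: abs_if)
qed

lemma div_le_self_real: "0 \<le> (a::real) \<Longrightarrow> 1 \<le> b \<Longrightarrow> a / b \<le> a"
proof -
  assume a: "0 \<le> a" and b: "1 \<le> b"
  have "a * 1 \<le> a * b" using b a by (rule mult_left_mono)
  thus ?thesis using b by (simp add: divide_le_eq)
qed

lemma harm_ln_ratio: "(\<lambda>n. harm n / ln (real n) :: real) \<longlonglongrightarrow> 1"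
proof -
  have L: "filterlim (\<lambda>n. ln (real n)) at_top sequentially"
    by (rule filterlim_compose[OF ln_at_top filterlim_real_sequentially])
  have "(\<lambda>n. 1 + (harm n - ln (real n)) * inverse (ln (real n)) :: real) \<longlonglongrightarrow> 1 + euler_mascheroni * 0"
    by (intro tendsto_intros euler_mascheroni_LIMSEQ filterlim_compose[OF tendsto_inverse_0_at_top L] filterlim_ident)
  hence "(\<lambda>n. 1 + (harm n - ln (real n)) * inverse (ln (real n)) :: real) \<longlonglongrightarrow> 1" by simp
  moreover have "\<forall>\<^sub>F n in sequentially. 1 + (harm n - ln (real n)) * inverse (ln (real n)) = harm n / ln (real n)"
  proof (rule eventually_sequentiallyI[of 2])
    fix n :: nat assume "2 \<le> n"
    hence "ln (real n) > 0" by simp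
    thus "1 + (harm n - ln (real n)) * inverse (ln (real n)) = harm n / ln (real n)"
      by (simp add: field_simps)
  qed
  ultimately show ?thesis by (rule Lim_transform_eventually)
qed



theorem mainTheorem5:
  fixes M :: "'a measure"
    and Y :: "'a \<Rightarrow> real"
    and X :: "nat \<Rightarrow> nat \<Rightarrow> 'a \<Rightarrow> real"
  assumes "prob_space M"
    and Y_rv: "Y \<in> borel_measurable M"
    and Y_sq: "integrable M (\<lambda>x. (Y x)\<^sup>2)"
    and Y_var_pos: "prob_space.variance M Y > 0"
    and X_indep: "prob_space.indep_vars M (\<lambda>_. borel) (\<lambda>(i, k). X i k) {(i, k). 1 \<le> i \<and> i \<le> k}"
    and X_distr: "\<And>i k. 1 \<le> i \<Longrightarrow> i \<le> k \<Longrightarrow> distr M borel (X i k) = distr M borel Y"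
  shows "weak_conv_m
           (\<lambda>n. distr M borel
              (\<lambda>\<omega>. (\<Sum>k=1..n. (\<Sum>i=1..k. X i k \<omega>) / real k - prob_space.expectation M Y)
                   / (sqrt (prob_space.variance M Y) * sqrt (ln (real n)))))
           std_normal_distribution"
proof -
  interpret P: prob_space M by fact
  define m where "m = P.expectation Y"
  define \<sigma>2 where "\<sigma>2 = P.variance Y"
  define c where "c n = sqrt \<sigma>2 * sqrt (ln (real n))" for n :: nat
  define A where "A n = {(i,k). 1\<le>i \<and> i\<le>k \<and> k\<le>(n::nat)}" for n
  define W where "W n p \<omega> = ((case p of (i,k) \<Rightarrow> X i k) \<omega> - m) / (real (snd p) * c n)" for n p \<omega>
  define Z where "Z \<omega> = Y \<omega> - m" for \<omega>
  define \<nu> where "\<nu> = distr M borel Z"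
  define G where "G s = P.expectation (\<lambda>\<omega>. min (6 * (Z \<omega>)\<^sup>2) (\<bar>s\<bar> * \<bar>Z \<omega>\<bar> ^ 3))" for s
  have \<sigma>pos: "\<sigma>2 > 0" using Y_var_pos by (simp add: \<sigma>2_def)
  have Xrv[measurable]: "X i k \<in> borel_measurable M" if "1 \<le> i" "i \<le> k" for i k
    using X_indep that unfolding P.indep_vars_def2 by force
  have Yint: "integrable M Y"
    by (rule P.square_integrable_imp_integrable[OF Y_rv Y_sq])
  have Zrv[measurable]: "Z \<in> borel_measurable M" unfolding Z_def using Y_rv by simp
  have Zint: "integrable M Z" unfolding Z_def using Yint by simp
  have Zsq: "integrable M (\<lambda>\<omega>. (Z \<omega>)\<^sup>2)"
    unfolding Z_def power2_diff using Yint Y_sq by (intro Bochner_Integration.integrable_diff Bochner_Integration.integrable_add) auto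
  have Zmean: "P.expectation Z = 0"
    unfolding Z_def m_def using Yint by (simp add: P.prob_space)
  have Zvar: "P.variance Z = \<sigma>2"
    unfolding \<sigma>2_def Zmean by (simp add: Z_def m_def)
  have \<nu>rd: "real_distribution \<nu>" unfolding \<nu>_def using Zrv by simp
  have approx: "cmod (char \<nu> s - (1 - s^2 * \<sigma>2 / 2)) \<le> s\<^sup>2 / 6 * G s" for s
    unfolding G_def
    by (rule P.char_approx3'[OF Zrv Zint Zsq Zmean Zvar \<nu>_def])

  have Gint: "integrable M (\<lambda>\<omega>. min (6 * (Z \<omega>)\<^sup>2) (\<bar>s\<bar> * \<bar>Z \<omega>\<bar> ^ 3))" for s
    by (rule Bochner_Integration.integrable_bound[OF integrable_mult_right[OF Zsq, of 6]]) auto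
  have Gnn: "0 \<le> G s" for s unfolding G_def by (intro integral_nonneg_AE AE_I2) auto
  have Gmono: "G s \<le> G s'" if "\<bar>s\<bar> \<le> \<bar>s'\<bar>" for s s'
    unfolding G_def using that
    by (intro integral_mono Gint) (auto intro!: min.mono mult_right_mono simp: min_le_iff_disj)
  have finA: "finite (A n)" for n unfolding A_def by (rule finite_tri)
  have Wrv[measurable]: "W n p \<in> borel_measurable M" if "p \<in> A n" for n p
    using that unfolding W_def A_def by (auto split: prod.splits)
  have charW: "char (distr M borel (W n p)) t = char \<nu> (t / (real (snd p) * c n))" if pA: "p \<in> A n" for n p t
  proof -
    obtain i k where p: "p = (i,k)" and ik: "1 \<le> i" "i \<le> k" using pA unfolding A_def by auto
    define a where "a = real k * c n"
    have "char (distr M borel (W n p)) t = (CLINT \<omega>|M. iexp (t * ((X i k \<omega> - m) / a)))"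
      unfolding char_def using that by (subst integral_distr) (auto simp: W_def p a_def)
    also have "\<dots> = (CLINT x|distr M borel (X i k). iexp (t * ((x - m) / a)))"
      using ik by (subst integral_distr) auto
    also have "\<dots> = (CLINT x|distr M borel Y. iexp (t * ((x - m) / a)))"
      using ik by (simp add: X_distr)
    also have "\<dots> = (CLINT \<omega>|M. iexp (t / a * Z \<omega>))"
      using Y_rv by (subst integral_distr) (auto simp: Z_def)
    also have "\<dots> = char \<nu> (t / a)"
      unfolding char_def \<nu>_def by (subst integral_distr) auto
    finally show ?thesis by (simp add: p a_def)
  qed
  have charT: "char (distr M borel (\<lambda>\<omega>. \<Sum>p\<in>A n. W n p \<omega>)) t = (\<Prod>p\<in>A n. char \<nu> (t / (real (snd p) * c n)))" for n t
  proof -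
    have "P.indep_vars (\<lambda>_. borel) (\<lambda>p \<omega>. (\<lambda>x. (x - m) / (real (snd p) * c n)) ((\<lambda>(i, k). X i k) p \<omega>)) (A n)"
      by (rule P.indep_vars_compose2[OF P.indep_vars_subset[OF X_indep]]) (auto simp: A_def)
    hence "P.indep_vars (\<lambda>_. borel) (W n) (A n)"
      unfolding W_def by (simp add: case_prod_beta)
    hence "char (distr M borel (\<lambda>\<omega>. \<Sum>p\<in>A n. W n p \<omega>)) t = (\<Prod>p\<in>A n. char (distr M borel (W n p)) t)"
      by (rule P.char_distr_sum)
    also have "\<dots> = (\<Prod>p\<in>A n. char \<nu> (t / (real (snd p) * c n)))"
      by (rule prod.cong) (auto simp: charW)
    finally show ?thesis .
  qed
  have rewr: "(\<lambda>\<omega>. (\<Sum>k=1..n. (\<Sum>i=1..k. X i k \<omega>) / real k - P.expectation Y)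
                   / (sqrt (P.variance Y) * sqrt (ln (real n)))) = (\<lambda>\<omega>. \<Sum>p\<in>A n. W n p \<omega>)" for n
  proof
    fix \<omega>
    have "(\<Sum>p\<in>A n. W n p \<omega>) = (\<Sum>k=1..n. \<Sum>i=1..k. (X i k \<omega> - m) / (real k * c n))"
      unfolding A_def W_def using tri_sum[of "\<lambda>i k. (X i k \<omega> - m) / (real k * c n)" n]
      by (simp add: case_prod_beta)
    also have "\<dots> = (\<Sum>k=1..n. (\<Sum>i=1..k. X i k \<omega>) / real k - m) / c n"
    proof -
      have "(\<Sum>i=1..k. (X i k \<omega> - m) / (real k * c n)) = ((\<Sum>i=1..k. X i k \<omega>) / real k - m) / c n"
        if "1 \<le> k" for k
      proof -
        have "(\<Sum>i=1..k. (X i k \<omega> - m) / (real k * c n)) = ((\<Sum>i=1..k. X i k \<omega>) - real k * m) / real k / c n"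
          by (simp add: sum_divide_distrib[symmetric] sum_subtractf divide_divide_eq_left)
        also have "\<dots> = ((\<Sum>i=1..k. X i k \<omega>) / real k - m) / c n"
          using that by (simp add: field_simps)
        finally show ?thesis .
      qed
      thus ?thesis by (simp add: sum_divide_distrib)
    qed
    finally show "(\<Sum>k=1..n. (\<Sum>i=1..k. X i k \<omega>) / real k - P.expectation Y)
                   / (sqrt (P.variance Y) * sqrt (ln (real n))) = (\<Sum>p\<in>A n. W n p \<omega>)"
      by (simp add: m_def \<sigma>2_def c_def)
  qed

  define L where "L n = ln (real n)" for n :: nat
  have Ltop: "filterlim L at_top sequentially"
    unfolding L_def by (rule filterlim_compose[OF ln_at_top filterlim_real_sequentially])
  have ctop: "filterlim c at_top sequentially"
    unfolding c_def L_def[symmetric]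
    by (rule filterlim_tendsto_pos_mult_at_top[OF tendsto_const])
       (use \<sigma>pos in \<open>auto intro: filterlim_compose[OF sqrt_at_top Ltop]\<close>)
  have c2: "(c n)\<^sup>2 = \<sigma>2 * L n" if "n \<ge> 2" for n
    using that \<sigma>pos unfolding c_def L_def by (simp add: power_mult_distrib)
  have cpos: "c n > 0" if "n \<ge> 2" for n
    using that \<sigma>pos unfolding c_def by simp
  have Lpos: "L n > 0" if "n \<ge> 2" for n
    using that unfolding L_def by simp
  have char_conv: "(\<lambda>n. char (distr M borel (\<lambda>\<omega>. \<Sum>p\<in>A n. W n p \<omega>)) t) \<longlonglongrightarrow> char std_normal_distribution t" for t
  proof -
    define g where "g n = G (t / c n)" for n
    define xk where "xk n k = t\<^sup>2 / (2 * (real k)\<^sup>2 * L n)" for n k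
    define Cn where "Cn n = t\<^sup>2 * g n / (6 * \<sigma>2 * L n) + t^4 / (4 * (L n)\<^sup>2)" for n
    define E where "E n = complex_of_real (exp (-(t\<^sup>2/2) * (harm n / L n)))" for n
    have tc0: "(\<lambda>n. t / c n) \<longlonglongrightarrow> 0"
      by (rule tendsto_divide_0[OF tendsto_const filterlim_at_top_imp_at_infinity[OF ctop]])
    have g0: "g \<longlonglongrightarrow> 0"
    proof -
      have "(\<lambda>n. G (t / c n)) \<longlonglongrightarrow> P.expectation (\<lambda>\<omega>. 0)"
        unfolding G_def
      proof (rule integral_dominated_convergence[where w="\<lambda>\<omega>. 6 * (Z \<omega>)\<^sup>2"])
        show "integrable M (\<lambda>\<omega>. 6 * (Z \<omega>)\<^sup>2)" using Zsq by simp
        show "AE \<omega> in M. (\<lambda>n. min (6 * (Z \<omega>)\<^sup>2) (\<bar>t / c n\<bar> * \<bar>Z \<omega>\<bar> ^ 3)) \<longlonglongrightarrow> 0"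
        proof (rule AE_I2)
          fix \<omega>
          have "(\<lambda>n. min (6 * (Z \<omega>)\<^sup>2) (\<bar>t / c n\<bar> * \<bar>Z \<omega>\<bar> ^ 3)) \<longlonglongrightarrow> min (6 * (Z \<omega>)\<^sup>2) (\<bar>0\<bar> * \<bar>Z \<omega>\<bar> ^ 3)"
            by (intro tendsto_intros tc0)
          thus "(\<lambda>n. min (6 * (Z \<omega>)\<^sup>2) (\<bar>t / c n\<bar> * \<bar>Z \<omega>\<bar> ^ 3)) \<longlonglongrightarrow> 0" by simp
        qed
      qed auto
      thus ?thesis unfolding g_def by simp
    qed
    have tmb: "cmod (char \<nu> (t / (real k * c n)) - complex_of_real (exp (- xk n k))) \<le> Cn n / (real k)\<^sup>2"
      if n2: "n \<ge> 2" and k1: "k \<ge> 1" for n k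
    proof -
      define s where "s = t / (real k * c n)"
      have cp: "c n > 0" and Lp: "L n > 0" using cpos Lpos n2 by auto
      have kp: "real k \<ge> 1" using k1 by simp
      have s2: "s\<^sup>2 = t\<^sup>2 / ((real k)\<^sup>2 * (\<sigma>2 * L n))"
        unfolding s_def power_divide power_mult_distrib c2[OF n2] ..
      have x: "s\<^sup>2 * \<sigma>2 / 2 = xk n k"
      proof -
        have "s\<^sup>2 * \<sigma>2 / 2 = t\<^sup>2 * \<sigma>2 / ((real k)\<^sup>2 * (\<sigma>2 * L n) * 2)" unfolding s2 by simp
        also have "\<dots> = t\<^sup>2 / (2 * (real k)\<^sup>2 * L n)"
          using \<sigma>pos by (simp add: mult.commute mult.left_commute)
        finally show ?thesis unfolding xk_def .
      qed
      have xnn: "xk n k \<ge> 0" unfolding xk_def using Lp by simp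
      have "\<bar>t\<bar> / (real k * c n) \<le> \<bar>t\<bar> / c n"
        by (rule divide_left_mono) (use cp kp in auto)
      moreover have "\<bar>s\<bar> = \<bar>t\<bar> / (real k * c n)" unfolding s_def abs_divide abs_mult using cp by simp
      moreover have "\<bar>t / c n\<bar> = \<bar>t\<bar> / c n" unfolding abs_divide using cp by simp
      ultimately have "\<bar>s\<bar> \<le> \<bar>t / c n\<bar>" by linarith
      hence Gs: "G s \<le> g n" unfolding g_def by (rule Gmono)
      have tri: "cmod (char \<nu> s - complex_of_real (exp (- xk n k)))
          \<le> cmod (char \<nu> s - complex_of_real (1 - s\<^sup>2 * \<sigma>2 / 2)) + cmod (complex_of_real (1 - s\<^sup>2 * \<sigma>2 / 2) - complex_of_real (exp (- xk n k)))"
        by (rule norm_diff_triangle_le[OF order_refl order_refl])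
      have part2: "cmod (complex_of_real (1 - s\<^sup>2 * \<sigma>2 / 2) - complex_of_real (exp (- xk n k))) \<le> t^4 / (4 * (L n)\<^sup>2) / (real k)\<^sup>2"
      proof -
        have "cmod (complex_of_real (1 - s\<^sup>2 * \<sigma>2 / 2) - complex_of_real (exp (- xk n k))) = \<bar>(1 - xk n k) - exp (- xk n k)\<bar>"
          unfolding x by (simp only: of_real_diff[symmetric] norm_of_real)
        also have "\<dots> \<le> (xk n k)\<^sup>2" by (rule exp_minus_approx[OF xnn])
        also have "(xk n k)\<^sup>2 = t^4 / (4 * (L n)\<^sup>2) / (real k)\<^sup>2 / (real k)\<^sup>2"
          unfolding xk_def using kp Lp by (simp add: field_simps power2_eq_square power4_eq_xxxx)
        also have "\<dots> \<le> t^4 / (4 * (L n)\<^sup>2) / (real k)\<^sup>2"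
          by (rule div_le_self_real) (use kp in \<open>auto simp: one_le_power\<close>)
        finally show ?thesis .
      qed
      have part1: "cmod (char \<nu> s - complex_of_real (1 - s\<^sup>2 * \<sigma>2 / 2)) \<le> t\<^sup>2 * g n / (6 * \<sigma>2 * L n) / (real k)\<^sup>2"
      proof -
        have "cmod (char \<nu> s - complex_of_real (1 - s\<^sup>2 * \<sigma>2 / 2)) \<le> s\<^sup>2 / 6 * G s" by (rule approx)
        also have "s\<^sup>2 / 6 * G s \<le> s\<^sup>2 / 6 * g n" using Gs by (simp add: mult_left_mono)
        also have "s\<^sup>2 / 6 * g n = t\<^sup>2 * g n / (6 * \<sigma>2 * L n) / (real k)\<^sup>2"
          unfolding s2 using kp Lp \<sigma>pos by (simp add: field_simps)
        finally show ?thesis .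
      qed
      have "cmod (char \<nu> s - complex_of_real (exp (- xk n k))) \<le> t\<^sup>2 * g n / (6 * \<sigma>2 * L n) / (real k)\<^sup>2 + t^4 / (4 * (L n)\<^sup>2) / (real k)\<^sup>2"
        using tri part1 part2 by linarith
      thus ?thesis unfolding Cn_def s_def by (simp add: add_divide_distrib)
    qed
    have main: "\<forall>\<^sub>F n in sequentially. cmod (char (distr M borel (\<lambda>\<omega>. \<Sum>p\<in>A n. W n p \<omega>)) t - E n) \<le> Cn n * harm n"
    proof (rule eventually_sequentiallyI[of 2])
      fix n :: nat assume n2: "2 \<le> n"
      have xnn': "\<And>k. xk n k \<ge> 0" using Lpos[OF n2] by (simp add: xk_def)
      have E_eq: "E n = (\<Prod>p\<in>A n. complex_of_real (exp (- xk n (snd p))))"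
      proof -
        have "(\<Sum>p\<in>A n. - xk n (snd p)) = (\<Sum>k=1..n. \<Sum>i=1..k. - xk n k)"
          unfolding A_def by (rule tri_sum)
        also have "\<dots> = (\<Sum>k=1..n. -(t\<^sup>2/2) / L n * inverse (real k))"
          by (rule sum.cong) (auto simp: xk_def field_simps power2_eq_square)
        also have "\<dots> = -(t\<^sup>2/2) / L n * harm n"
          unfolding harm_def sum_distrib_left ..
        also have "\<dots> = -(t\<^sup>2/2) * (harm n / L n)" by simp
        finally have "(\<Sum>p\<in>A n. - xk n (snd p)) = -(t\<^sup>2/2) * (harm n / L n)" .
        hence "exp (-(t\<^sup>2/2) * (harm n / L n)) = (\<Prod>p\<in>A n. exp (- xk n (snd p)))"
          by (metis exp_sum finA)
        thus ?thesis unfolding E_def by simp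
      qed
      have "cmod (char (distr M borel (\<lambda>\<omega>. \<Sum>p\<in>A n. W n p \<omega>)) t - E n)
          = cmod ((\<Prod>p\<in>A n. char \<nu> (t / (real (snd p) * c n))) - (\<Prod>p\<in>A n. complex_of_real (exp (- xk n (snd p)))))"
        by (simp add: charT E_eq)
      also have "\<dots> \<le> (\<Sum>p\<in>A n. cmod (char \<nu> (t / (real (snd p) * c n)) - complex_of_real (exp (- xk n (snd p)))))"
        by (rule norm_prod_diff) (auto simp: real_distribution.cmod_char_le_1[OF \<nu>rd] xnn')
      also have "\<dots> \<le> (\<Sum>p\<in>A n. Cn n / (real (snd p))\<^sup>2)"
        by (rule sum_mono) (auto simp: A_def intro!: tmb[OF n2])
      also have "\<dots> = (\<Sum>k=1..n. \<Sum>i=1..k. Cn n / (real k)\<^sup>2)"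
        unfolding A_def by (rule tri_sum)
      also have "\<dots> = (\<Sum>k=1..n. Cn n * inverse (real k))"
        by (rule sum.cong) (auto simp: field_simps power2_eq_square)
      also have "\<dots> = Cn n * harm n"
        by (simp add: harm_def sum_distrib_left)
      finally show "cmod (char (distr M borel (\<lambda>\<omega>. \<Sum>p\<in>A n. W n p \<omega>)) t - E n) \<le> Cn n * harm n" .
    qed
    have bound0: "(\<lambda>n. Cn n * harm n) \<longlonglongrightarrow> 0"
    proof -
      have HL: "(\<lambda>n. harm n / L n :: real) \<longlonglongrightarrow> 1" unfolding L_def by (rule harm_ln_ratio)
      have iL: "(\<lambda>n. inverse (L n)) \<longlonglongrightarrow> 0" by (rule filterlim_compose[OF tendsto_inverse_0_at_top Ltop]) (simp add: filterlim_ident)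
      have "(\<lambda>n. (t\<^sup>2 * g n / (6 * \<sigma>2) + t^4 / 4 * inverse (L n)) * (harm n / L n)) \<longlonglongrightarrow> (t\<^sup>2 * 0 / (6 * \<sigma>2) + t^4 / 4 * 0) * 1"
        using \<sigma>pos by (intro tendsto_intros g0 iL HL) auto
      hence "(\<lambda>n. (t\<^sup>2 * g n / (6 * \<sigma>2) + t^4 / 4 * inverse (L n)) * (harm n / L n)) \<longlonglongrightarrow> 0" by simp
      moreover have "\<forall>\<^sub>F n in sequentially. (t\<^sup>2 * g n / (6 * \<sigma>2) + t^4 / 4 * inverse (L n)) * (harm n / L n) = Cn n * harm n"
      proof (rule eventually_sequentiallyI[of 2])
        fix n :: nat assume "2 \<le> n"
        hence "L n > 0" by (rule Lpos)
        thus "(t\<^sup>2 * g n / (6 * \<sigma>2) + t^4 / 4 * inverse (L n)) * (harm n / L n) = Cn n * harm n"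
          unfolding Cn_def using \<sigma>pos by (simp add: field_simps power2_eq_square)
      qed
      ultimately show ?thesis by (rule Lim_transform_eventually)
    qed
    have Econv: "E \<longlonglongrightarrow> complex_of_real (exp (-(t\<^sup>2/2) * 1))"
      unfolding E_def L_def by (intro tendsto_intros harm_ln_ratio)
    have "(\<lambda>n. char (distr M borel (\<lambda>\<omega>. \<Sum>p\<in>A n. W n p \<omega>)) t) \<longlonglongrightarrow> complex_of_real (exp (-(t\<^sup>2/2) * 1))"
      by (rule Lim_transform[OF Econv]) (rule Lim_null_comparison[OF main bound0])
    thus ?thesis by (simp add: char_std_normal_distribution)
  qed
  have "weak_conv_m (\<lambda>n. distr M borel (\<lambda>\<omega>. \<Sum>p\<in>A n. W n p \<omega>)) std_normal_distribution"
  proof (rule levy_continuity[OF _ real_dist_normal_dist char_conv])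
    fix n
    have "(\<lambda>\<omega>. \<Sum>p\<in>A n. W n p \<omega>) \<in> borel_measurable M"
      by (rule borel_measurable_sum) (rule Wrv)
    thus "real_distribution (distr M borel (\<lambda>\<omega>. \<Sum>p\<in>A n. W n p \<omega>))" by simp
  qed
  thus ?thesis unfolding rewr .
qed

end
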